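(* Let $(b_1,b_2)$ and $(\tilde b_1,\tilde b_2)$ be real pairs with $b_1\ne1$, $\tilde b_1\ne1$, $(b_1,b_2)\ne(0,0)$, $(\tilde b_1,\tilde b_2)\ne(0,0)$. Then $\Gamma_c^2(b_1,b_2)$ is linearly equivalent to $\Gamma_c^2(\tilde b_1,\tilde b_2)$ if and only if $b_1=\tilde b_1$ and $b_2=\pm\tilde b_2$. Moreover the Ricci tensor of $\Gamma_c^2(b_1,b_2)$ is positive definite if $b_1>1$ and indefinite if $b_1<1$.
   Context: A torsion-free connection has Christoffel symbols $\nabla_{\partial_{x^i}}\partial_{x^j}=\Gamma_{ij}^k\partial_{x^k}$; curvature $R(X,Y)Z=\nabla_X\nabla_YZ-\nabla_Y\nabla_XZ-\nabla_{[X,Y]}Z$, Ricci tensor $\rho(Y,Z)=\mathrm{Tr}(X\mapsto R(X,Y)Z)$. For real constants, $\Gamma(a,b,c,d,e,f)$ denotes the connection on $\mathbb R^2$ with constant Christoffel symbols $\Gamma_{11}^1=a$, $\Gamma_{11}^2=b$, $\Gamma_{12}^1=\Gamma_{21}^1=c$, $\Gamma_{12}^2=\Gamma_{21}^2=d$, $\Gamma_{22}^1=e$, $\Gamma_{22}^2=f$. For $b_1\ne1$, $\Gamma_c^2(b_1,b_2):=\Gamma(1+b_1,0,b_2,1,\frac{1+b_2^2}{b_1-1},0)$. Two such connections are linearly equivalent if there is $T\in GL(2,\mathbb R)$ with $T^*\nabla_2=\nabla_1$. *)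

theory Defs
  imports Complex_Main
begin

text \<open>A connection on R^2 with constant Christoffel symbols is represented by
  its Christoffel symbols: Chr i j k = Gamma_{ij}^k, indices i, j, k in {1,2}.\<close>

type_synonym christoffel = "nat \<Rightarrow> nat \<Rightarrow> nat \<Rightarrow> real"

definition Gam :: "real \<Rightarrow> real \<Rightarrow> real \<Rightarrow> real \<Rightarrow> real \<Rightarrow> real \<Rightarrow> christoffel" where
  "Gam a b c d e f = (\<lambda>i j k.
     if i = 1 \<and> j = 1 then (if k = 1 then a else b)
     else if i = 2 \<and> j = 2 then (if k = 1 then e else f)
     else (if k = 1 then c else d))"

definition Gamma_c2 :: "real \<Rightarrow> real \<Rightarrow> christoffel" where
  "Gamma_c2 b1 b2 = Gam (1 + b1) 0 b2 1 ((1 + b2^2) / (b1 - 1)) 0"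

text \<open>Curvature components: R(d_i,d_j)d_k = sum_m curv G i j k m d_m
  (constant coefficients, coordinate fields commute).\<close>
definition curv :: "christoffel \<Rightarrow> nat \<Rightarrow> nat \<Rightarrow> nat \<Rightarrow> nat \<Rightarrow> real" where
  "curv G i j k m = (\<Sum>l\<in>{1..2}. G j k l * G i l m - G i k l * G j l m)"

text \<open>Ricci tensor rho(d_j,d_k) = Tr(X \<mapsto> R(X,d_j)d_k).\<close>
definition ricci :: "christoffel \<Rightarrow> nat \<Rightarrow> nat \<Rightarrow> real" where
  "ricci G j k = (\<Sum>i\<in>{1..2}. curv G i j k i)"

definition ricci_form :: "christoffel \<Rightarrow> real \<times> real \<Rightarrow> real \<times> real \<Rightarrow> real" where
  "ricci_form G v w = (let x = (\<lambda>i. if i = (1::nat) then fst v else snd v);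
                           y = (\<lambda>i. if i = (1::nat) then fst w else snd w)
                       in \<Sum>j\<in>{1..2}. \<Sum>k\<in>{1..2}. x j * y k * ricci G j k)"

definition pos_def_form :: "(real \<times> real \<Rightarrow> real \<times> real \<Rightarrow> real) \<Rightarrow> bool" where
  "pos_def_form B = (\<forall>v. v \<noteq> (0,0) \<longrightarrow> B v v > 0)"

definition indefinite_form :: "(real \<times> real \<Rightarrow> real \<times> real \<Rightarrow> real) \<Rightarrow> bool" where
  "indefinite_form B = ((\<exists>v. B v v > 0) \<and> (\<exists>w. B w w < 0))"

text \<open>T in GL(2,R), given by its matrix T a b (a,b in {1,2}), T d_i = sum_a T a i d_a.
  T^* nabla2 = nabla1 means T(nabla1_X Y) = nabla2_{TX} (TY); for constant-coefficient
  connections and linear T it suffices to test on coordinate fields.\<close>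
definition lin_equiv :: "christoffel \<Rightarrow> christoffel \<Rightarrow> bool" where
  "lin_equiv G1 G2 = (\<exists>T :: nat \<Rightarrow> nat \<Rightarrow> real.
      T 1 1 * T 2 2 - T 1 2 * T 2 1 \<noteq> 0 \<and>
      (\<forall>i\<in>{1..2}. \<forall>j\<in>{1..2}. \<forall>c\<in>{1..2}.
         (\<Sum>k\<in>{1..2}. G1 i j k * T c k) =
         (\<Sum>a\<in>{1..2}. \<Sum>b\<in>{1..2}. T a i * T b j * G2 a b c)))"

end

theory Submission imports Defs begin
lemma alg:
  fixes p q r s b1 b2 c1 c2 e E :: real
  assumes b1: "b1 \<noteq> 1" and c1: "c1 \<noteq> 1"
    and e: "e = (1+b2^2)/(b1-1)" and E: "E = (1+c2^2)/(c1-1)"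
    and det: "p*s - q*r \<noteq> 0"
    and E1: "(1+b1)*p = (1+c1)*p*p + 2*c2*p*r + E*r*r"
    and E2: "(1+b1)*r = 2*p*r"
    and E3: "b2*p + q = (1+c1)*p*q + c2*(p*s+q*r) + E*r*s"
    and E4: "b2*r + s = p*s + q*r"
    and E5: "e*p = (1+c1)*q*q + 2*c2*q*s + E*s*s"
    and E6: "e*r = 2*q*s"
  shows "b1 = c1 \<and> (b2 = c2 \<or> b2 = - c2)"
proof (cases "r = 0")
  case False
  have "(1+b1 - 2*p)*r = 0" using E2 by (simp add: algebra_simps)
  hence p: "p = (1+b1)/2" using False by simp
  have eb: "e*(b1-1) = 1+b2^2" using e b1 by (simp add: field_simps)
  have "r*(1+b2^2) = r*(e*(b1-1))" using eb by simp
  also have "\<dots> = (e*r)*(b1-1)" by (simp add: algebra_simps)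
  also have "\<dots> = 2*q*s*(b1-1)" using E6 by simp
  finally have rr: "r*(1+b2^2) = 2*q*s*(b1-1)" .
  have sp: "s*(p-1) = r*(b2-q)" using E4 by (simp add: algebra_simps)
  have bb: "b1 - 1 = 2*(p-1)" using p by simp
  have "s*(b1-1) = 2*(s*(p-1))" unfolding bb by (simp add: algebra_simps)
  also have "\<dots> = 2*r*(b2-q)" using sp by simp
  finally have "s*(b1-1) = 2*r*(b2-q)" .
  hence sb: "s*(b1-1) = 2*r*(b2-q)" .
  have "r*(1+b2^2) = 2*q*(s*(b1-1))" using rr by (simp add: algebra_simps)
  also have "\<dots> = 4*q*r*(b2-q)" using sb by simp
  finally have "r*(1+b2^2) = 4*q*r*(b2-q)" .
  hence "r*((2*q-b2)^2+1) = 0" by (simp add: algebra_simps power2_eq_square)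
  moreover have "(2*q-b2)^2 \<ge> 0" by simp
  hence "(2*q-b2)^2+1 \<noteq> 0" by linarith
  ultimately show ?thesis using False by simp
next
  case True
  hence ps: "p \<noteq> 0" "s \<noteq> 0" using det by auto
  have q: "q = 0" using E6 True ps by simp
  have p: "p = 1" using E4 True q ps by simp
  have bc: "b1 = c1" using E1 True p by simp
  have b2: "b2 = c2*s" using E3 True p q by simp
  have "e = E*s^2" using E5 p q by (simp add: power2_eq_square)
  hence "1+b2^2 = (1+c2^2)*s^2" using e E bc b1 by (simp add: field_simps)
  hence "s^2 = 1" using b2 by (simp add: algebra_simps power2_eq_square)
  hence "s = 1 \<or> s = -1" by (simp add: power2_eq_1_iff)
  thus ?thesis using bc b2 by auto
qed

lemma s2: "(\<Sum>k\<in>{1..2::nat}. f k) = f 1 + f 2"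
  by (simp add: numeral_2_eq_2)
lemma a2: "(\<forall>k\<in>{1..2::nat}. P k) = (P 1 \<and> P 2)"
  by (auto simp add: numeral_2_eq_2 le_Suc_eq)

lemma ricci_gen:
  "ricci (Gam a 0 c 1 e 0) 1 1 = a - 1"
  "ricci (Gam a 0 c 1 e 0) 1 2 = c"
  "ricci (Gam a 0 c 1 e 0) 2 1 = c"
  "ricci (Gam a 0 c 1 e 0) 2 2 = e*(a-1) - c^2"
  unfolding ricci_def curv_def Gam_def s2
  by (simp_all add: algebra_simps power2_eq_square)

lemma ricci_vals:
  "ricci (Gamma_c2 b1 b2) 1 1 = b1"
  "ricci (Gamma_c2 b1 b2) 1 2 = b2"
  "ricci (Gamma_c2 b1 b2) 2 1 = b2"
  "ricci (Gamma_c2 b1 b2) 2 2 = ((1+b2^2)/(b1-1))*b1 - b2^2"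
  unfolding Gamma_c2_def ricci_gen by simp_all

lemma rform: "ricci_form (Gamma_c2 b1 b2) (x,y) (x,y) =
   x*x*b1 + 2*x*y*b2 + y*y*(((1+b2^2)/(b1-1))*b1 - b2^2)"
  unfolding ricci_form_def Let_def s2 
  by (simp add: ricci_vals ricci_vals[simplified One_nat_def] algebra_simps)

lemma fwd:
  assumes b1: "b1 \<noteq> 1" and c1: "c1 \<noteq> 1"
  and L: "lin_equiv (Gamma_c2 b1 b2) (Gamma_c2 c1 c2)"
  shows "b1 = c1 \<and> (b2 = c2 \<or> b2 = - c2)"
proof -
  obtain T where det: "T 1 1 * T 2 2 - T 1 2 * T 2 1 \<noteq> 0" and
    h: "\<forall>i\<in>{1..2}. \<forall>j\<in>{1..2}. \<forall>c\<in>{1..2}.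
         (\<Sum>k\<in>{1..2}. Gamma_c2 b1 b2 i j k * T c k) =
         (\<Sum>a\<in>{1..2}. \<Sum>b\<in>{1..2}. T a i * T b j * Gamma_c2 c1 c2 a b c)"
    using L unfolding lin_equiv_def by blast
  define e where "e = (1+b2^2)/(b1-1)"
  define E where "E = (1+c2^2)/(c1-1)"
  have h2: "(\<Sum>k\<in>{1..2}. Gamma_c2 b1 b2 i j k * T c k) =
         (\<Sum>a\<in>{1..2}. \<Sum>b\<in>{1..2}. T a i * T b j * Gamma_c2 c1 c2 a b c)"
    if "i \<in> {1,2}" "j \<in> {1,2}" "c \<in> {1,2}" for i j c
    using h that by (auto simp: numeral_2_eq_2)
  note h3 = h2[unfolded s2 Gamma_c2_def Gam_def, folded e_def E_def]
  have E1: "(1+b1)*T 1 1 = (1+c1)*T 1 1*T 1 1 + 2*c2*T 1 1*T 2 1 + E*T 2 1*T 2 1"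
    using h3[of 1 1 1] by (simp add: algebra_simps)
  have E2: "(1+b1)*T 2 1 = 2*T 1 1*T 2 1"
    using h3[of 1 1 2] by (simp add: algebra_simps)
  have E3: "b2*T 1 1 + T 1 2 = (1+c1)*T 1 1*T 1 2 + c2*(T 1 1*T 2 2+T 1 2*T 2 1) + E*T 2 1*T 2 2"
    using h3[of 1 2 1] by (simp add: algebra_simps)
  have E4: "b2*T 2 1 + T 2 2 = T 1 1*T 2 2 + T 1 2*T 2 1"
    using h3[of 1 2 2] by (simp add: algebra_simps)
  have E5: "e*T 1 1 = (1+c1)*T 1 2*T 1 2 + 2*c2*T 1 2*T 2 2 + E*T 2 2*T 2 2"
    using h3[of 2 2 1] by (simp add: algebra_simps)
  have E6: "e*T 2 1 = 2*T 1 2*T 2 2"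
    using h3[of 2 2 2] by (simp add: algebra_simps)
  show ?thesis using alg[OF b1 c1 e_def E_def det E1 E2 E3 E4 E5 E6] .
qed

lemma bwd:
  assumes "b1 = c1" and s: "s = 1 \<or> s = -1" and "b2 = s * c2"
  shows "lin_equiv (Gamma_c2 b1 b2) (Gamma_c2 c1 c2)"
proof -
  have ss: "s*s = 1" using s by auto
  show ?thesis
  unfolding lin_equiv_def a2 s2 Gamma_c2_def Gam_def
  apply (rule exI[of _ "\<lambda>a b. if a = 1 \<and> b = 1 then 1 else if a = 2 \<and> b = 2 then s else 0"])
  using assms ss by (auto simp: power2_eq_square algebra_simps)
qed

lemma keyid:
  assumes "b1 \<noteq> 1"
  shows "b1 * ricci_form (Gamma_c2 b1 b2) (x,y) (x,y) = (b1*x+b2*y)^2 + y^2*((b1^2+b2^2)/(b1-1))"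
proof -
  have "b1 - 1 \<noteq> 0" using assms by simp
  thus ?thesis unfolding rform by (simp add: field_simps power2_eq_square)
qed


lemma nzl: "(b1::real, b2) \<noteq> (0, 0) \<Longrightarrow> b1^2 + b2^2 > 0"
  by (auto simp: sum_power2_gt_zero_iff)

lemma posdef:
  assumes b: "b1 > 1" and nz: "b1^2 + b2^2 > 0"
  shows "pos_def_form (ricci_form (Gamma_c2 b1 b2))"
  unfolding pos_def_form_def
proof (intro allI impI)
  fix v :: "real \<times> real"
  assume v: "v \<noteq> (0,0)"
  obtain x y where xy: "v = (x,y)" by (cases v)
  have b1: "b1 \<noteq> 1" using b by simp
  have D: "(b1^2+b2^2)/(b1-1) > 0" using b nz by simp
  show "ricci_form (Gamma_c2 b1 b2) v v > 0"
  proof (cases "y = 0")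
    case True
    hence "x \<noteq> 0" using v xy by simp
    hence "x*x > 0" by (auto simp: zero_less_mult_iff)
    hence "x*x*b1 > 0" using b by simp
    thus ?thesis unfolding xy rform True by simp
  next
    case False
    have "y^2 > 0" using False by simp
    hence "y^2 * ((b1^2+b2^2)/(b1-1)) > 0" using D by (rule mult_pos_pos)
    moreover have "(b1*x+b2*y)^2 \<ge> 0" by simp
    ultimately have "b1 * ricci_form (Gamma_c2 b1 b2) (x,y) (x,y) > 0" unfolding keyid[OF b1]
      by linarith
    thus ?thesis unfolding xy using b by (simp add: zero_less_mult_iff)
  qed
qed

lemma indef:
  assumes b: "b1 < 1" and nz: "b1^2 + b2^2 > 0"
  shows "indefinite_form (ricci_form (Gamma_c2 b1 b2))"
  unfolding indefinite_form_def
proof (cases "b1 = 0")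
  case True
  hence b2: "b2 \<noteq> 0" using nz by simp
  have "ricci_form (Gamma_c2 b1 b2) (b2,1) (b2,1) = b2^2"
    unfolding rform True by (simp add: power2_eq_square)
  hence "ricci_form (Gamma_c2 b1 b2) (b2,1) (b2,1) > 0" using b2 by simp
  moreover have "ricci_form (Gamma_c2 b1 b2) (0,1) (0,1) = -(b2^2)"
    unfolding rform True by (simp add: power2_eq_square)
  hence "ricci_form (Gamma_c2 b1 b2) (0,1) (0,1) < 0" using b2 by simp
  ultimately show "(\<exists>v. ricci_form (Gamma_c2 b1 b2) v v > 0) \<and> (\<exists>w. ricci_form (Gamma_c2 b1 b2) w w < 0)" by blast
next
  case False
  have b1: "b1 \<noteq> 1" using b by simp
  have D: "(b1^2+b2^2)/(b1-1) < 0" using b nz by (simp add: divide_pos_neg)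
  have k: "b1 * ricci_form (Gamma_c2 b1 b2) (-b2,b1) (-b2,b1) = b1^2 * ((b1^2+b2^2)/(b1-1))"
    unfolding keyid[OF b1] by simp
  have q1: "ricci_form (Gamma_c2 b1 b2) (1,0) (1,0) = b1" unfolding rform by simp
  have "b1^2 > 0" using False by simp
  hence "b1^2 * ((b1^2+b2^2)/(b1-1)) < 0" using D by (rule mult_pos_neg)
  hence k2: "b1 * ricci_form (Gamma_c2 b1 b2) (-b2,b1) (-b2,b1) < 0" unfolding k .
  show "(\<exists>v. ricci_form (Gamma_c2 b1 b2) v v > 0) \<and> (\<exists>w. ricci_form (Gamma_c2 b1 b2) w w < 0)"
  proof (cases "b1 > 0")
    case True
    hence "ricci_form (Gamma_c2 b1 b2) (-b2,b1) (-b2,b1) < 0" using k2 by (simp add: mult_less_0_iff)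
    moreover have "ricci_form (Gamma_c2 b1 b2) (1,0) (1,0) > 0" using q1 True by simp
    ultimately show ?thesis by blast
  next
    case f2: False
    hence "b1 < 0" using False by simp
    hence "ricci_form (Gamma_c2 b1 b2) (-b2,b1) (-b2,b1) > 0" using k2 by (simp add: mult_less_0_iff)
    moreover have "ricci_form (Gamma_c2 b1 b2) (1,0) (1,0) < 0" using q1 \<open>b1 < 0\<close> by simp
    ultimately show ?thesis by blast
  qed
qed

theorem mainTheorem16:
  fixes b1 b2 c1 c2 :: real
  assumes "b1 \<noteq> 1" and "c1 \<noteq> 1" and "(b1, b2) \<noteq> (0, 0)" and "(c1, c2) \<noteq> (0, 0)"
  shows "(lin_equiv (Gamma_c2 b1 b2) (Gamma_c2 c1 c2) \<longleftrightarrow> b1 = c1 \<and> (b2 = c2 \<or> b2 = - c2))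
         \<and> (b1 > 1 \<longrightarrow> pos_def_form (ricci_form (Gamma_c2 b1 b2)))
         \<and> (b1 < 1 \<longrightarrow> indefinite_form (ricci_form (Gamma_c2 b1 b2)))"
proof -
  have nz: "b1^2 + b2^2 > 0" using nzl assms(3) .
  have eq: "lin_equiv (Gamma_c2 b1 b2) (Gamma_c2 c1 c2) \<longleftrightarrow> b1 = c1 \<and> (b2 = c2 \<or> b2 = - c2)"
  proof
    assume "lin_equiv (Gamma_c2 b1 b2) (Gamma_c2 c1 c2)"
    thus "b1 = c1 \<and> (b2 = c2 \<or> b2 = - c2)" by (rule fwd[OF assms(1,2)])
  next
    assume h: "b1 = c1 \<and> (b2 = c2 \<or> b2 = - c2)"
    show "lin_equiv (Gamma_c2 b1 b2) (Gamma_c2 c1 c2)"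
    proof (cases "b2 = c2")
      case True
      have "(1::real) = 1 \<or> (1::real) = -1" by simp
      moreover have "b2 = 1 * c2" using True by simp
      ultimately show ?thesis using bwd[of b1 c1 1 b2 c2] h by blast
    next
      case False
      hence "b2 = (-1) * c2" using h by simp
      moreover have "(-1::real) = 1 \<or> (-1::real) = -1" by simp
      ultimately show ?thesis using bwd[of b1 c1 "-1" b2 c2] h by blast
    qed
  qed
  have p: "b1 > 1 \<longrightarrow> pos_def_form (ricci_form (Gamma_c2 b1 b2))" using posdef[OF _ nz] by blast
  have i: "b1 < 1 \<longrightarrow> indefinite_form (ricci_form (Gamma_c2 b1 b2))" using indef[OF _ nz] by blast
  show ?thesis using eq p i by (intro conjI)
qed

end
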